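(* Let $r_0>0$ and $T>0$, and let $$D_T=\{(u,r,s,\phi):\ u\ge 0,\ r\ge r_0,\ u+r\le T+r_0,\ -1\le s\le 1,\ \phi\in\mathbb{R}\}.$$ Let $R,P,Q$ be real-valued functions that are $C^1$ on $D_T$, $2\pi$-periodic in $\phi$, and satisfy at all points of $D_T$ with $|s|<1$ the system $$2R_u = R_r+\frac{\sqrt{1-s^2}}{r}P_s+\frac{1}{r\sqrt{1-s^2}}Q_\phi-\frac{sP}{r\sqrt{1-s^2}},\qquad P_r=\frac{\sqrt{1-s^2}}{r}R_s-\frac{P}{r},\qquad Q_r=\frac{1}{r\sqrt{1-s^2}}R_\phi-\frac{Q}{r}.$$ (The values $R|_{u=0}=f(r,s,\phi)$, $r_0\le r\le T+r_0$, and $P|_{r=r_0}=g(u,s,\phi)$, $Q|_{r=r_0}=h(u,s,\phi)$, $0\le u\le T$, are the free data of this characteristic problem.) Then, with $v=(R,P,Q)$, $$\|v\|_T^2\le 2\left(\int_{\Sigma_u}R^2\,d\Sigma_u+\int_{\Sigma_r}\left(P^2+Q^2\right)d\Sigma_r\right).$$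
   Context: Coordinates: $(r,\theta,\phi)$ are spherical spatial coordinates of Minkowski space, $s=\cos\theta$, and $u=t-r$; subscripts denote partial derivatives. The system is the first-order reduction of the wave equation for $g=r\psi$ via $R=g_r$, $P=g_s\sqrt{1-s^2}/r$, $Q=g_\phi/(r\sqrt{1-s^2})$, but the claim concerns arbitrary solutions $(R,P,Q)$ as specified. Surfaces and measures: $\Sigma_u=\{u=0,\ r_0\le r\le T+r_0\}$ (a null cone) with $d\Sigma_u=dr\,ds\,d\phi$; $\Sigma_r=\{r=r_0,\ 0\le u\le T\}$ (a timelike worldtube) with $d\Sigma_r=du\,ds\,d\phi$; in both, $s\in[-1,1]$ and $\phi\in[0,2\pi]$. The norm on $\Sigma_T=\{u+r=T+r_0\}$ is $$\|v\|_T^2=\int_{r_0}^{T+r_0}\!\!\int_{-1}^{1}\!\!\int_0^{2\pi}\big(R^2+P^2+Q^2\big)(T+r_0-r,r,s,\phi)\,d\phi\,ds\,dr .$$ *)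

theory Defs
  imports "HOL-Analysis.Analysis"
begin

type_synonym pt4 = "real \<times> real \<times> real \<times> real"  (* (u, r, s, phi) *)

definition D_T :: "real \<Rightarrow> real \<Rightarrow> pt4 set" where
  "D_T r0 T = {(u, r, s, \<phi>). 0 \<le> u \<and> r0 \<le> r \<and> u + r \<le> T + r0 \<and> -1 \<le> s \<and> s \<le> 1}"

definition C1_with :: "pt4 set \<Rightarrow> (pt4 \<Rightarrow> real) \<Rightarrow> (pt4 \<Rightarrow> (pt4 \<Rightarrow>\<^sub>L real)) \<Rightarrow> bool" where
  "C1_with D F F' \<longleftrightarrow> continuous_on D F' \<and>
     (\<forall>x\<in>D. (F has_derivative blinfun_apply (F' x)) (at x within D))"

definition d_u :: "(pt4 \<Rightarrow>\<^sub>L real) \<Rightarrow> real" where "d_u L = blinfun_apply L (1, 0, 0, 0)"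
definition d_r :: "(pt4 \<Rightarrow>\<^sub>L real) \<Rightarrow> real" where "d_r L = blinfun_apply L (0, 1, 0, 0)"
definition d_s :: "(pt4 \<Rightarrow>\<^sub>L real) \<Rightarrow> real" where "d_s L = blinfun_apply L (0, 0, 1, 0)"
definition d_phi :: "(pt4 \<Rightarrow>\<^sub>L real) \<Rightarrow> real" where "d_phi L = blinfun_apply L (0, 0, 0, 1)"

end

theory Submission
  imports Defs
begin


lemma C1_cont: "C1_with D F F' \<Longrightarrow> continuous_on D F"
  unfolding C1_with_def
  by (meson continuous_on_eq_continuous_within has_derivative_continuous)

lemma C1_cont': "C1_with D F F' \<Longrightarrow> continuous_on D (\<lambda>q. blinfun_apply (F' q) v)"
  unfolding C1_with_def
  by (auto intro!: continuous_intros)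

lemma affine_deriv: "((\<lambda>x::real. x *\<^sub>R v + c) has_derivative (\<lambda>h. h *\<^sub>R v)) F"
  by (auto intro!: derivative_eq_intros)

lemma C1_path:
  assumes "C1_with D F F'" "\<And>x. x \<in> S \<Longrightarrow> \<gamma> x \<in> D"
    "(\<gamma> has_derivative (\<lambda>h. h *\<^sub>R v)) (at x within S)" "x \<in> S"
  shows "((\<lambda>x. F (\<gamma> x)) has_real_derivative blinfun_apply (F' (\<gamma> x)) v) (at x within S)"
proof -
  have "((\<lambda>x. F (\<gamma> x)) has_derivative (\<lambda>h. blinfun_apply (F' (\<gamma> x)) (h *\<^sub>R v))) (at x within S)"
    apply (rule has_derivative_in_compose2[where t=D])
    using assms unfolding C1_with_def by auto
  moreover have "(\<lambda>h. blinfun_apply (F' (\<gamma> x)) (h *\<^sub>R v)) = (*) (blinfun_apply (F' (\<gamma> x)) v)"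
    by (auto simp: blinfun.scaleR_right)
  ultimately show ?thesis
    by (simp add: has_field_derivative_def)
qed

lemma blin4: "blinfun_apply L (a, b, 0, 0) = a * d_u L + b * d_r L"
proof -
  have e: "(a, b, 0::real, 0::real) = a *\<^sub>R (1,0,0,0) + b *\<^sub>R (0,1,0,0)" by simp
  have "blinfun_apply L (a, b, 0, 0) = blinfun_apply L (a *\<^sub>R (1,0,0,0)) + blinfun_apply L (b *\<^sub>R (0,1,0,0))"
    unfolding e by (rule blinfun.add_right)
  also have "\<dots> = a * d_u L + b * d_r L"
    unfolding d_u_def d_r_def blinfun.scaleR_right by simp
  finally show ?thesis .
qed

lemma inD: "(u,r,s,\<phi>) \<in> D_T r0 T \<longleftrightarrow> 0 \<le> u \<and> r0 \<le> r \<and> u+r \<le> T+r0 \<and> -1 \<le> s \<and> s \<le> 1"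
  by (simp add: D_T_def)



lemma alg:
  fixes a b c s Rv Pv Qv Ru Rr Rs Rp Pr Ps Qr Qp :: real
  assumes "2*Ru = Rr + a*Ps + b*Qp - s*Pv*b"
    "Pr = a*Rs - Pv*c" "Qr = b*Rp - Qv*c"
  shows "2*Rv*Ru + Pv*Pr + Qv*Qr - Rv*Rr + (Pv\<^sup>2+Qv\<^sup>2)*c
     = a*(Rs*Pv + Ps*Rv) - s*b*(Rv*Pv) + b*(Rp*Qv + Qp*Rv)"
proof -
  have "2*Rv*Ru = Rv*(2*Ru)" by simp
  then have h: "2*Rv*Ru = Rv*(Rr + a*Ps + b*Qp - s*Pv*b)" using assms(1) by simp
  show ?thesis unfolding h assms(2,3) power2_eq_square by algebra
qed

lemma path_s: "((\<lambda>x::real. (u::real,r::real,x,\<phi>::real)) has_derivative (\<lambda>h. h *\<^sub>R (0,0,1,0))) F"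
proof -
  have e: "(\<lambda>x::real. (u,r,x,\<phi>)) = (\<lambda>x. x *\<^sub>R (0,0,1,0) + (u,r,0,\<phi>))" by auto
  show ?thesis unfolding e by (rule affine_deriv)
qed

lemma path_phi: "((\<lambda>x::real. (u::real,r::real,s::real,x)) has_derivative (\<lambda>h. h *\<^sub>R (0,0,0,1))) F"
proof -
  have e: "(\<lambda>x::real. (u,r,s,x)) = (\<lambda>x. x *\<^sub>R (0,0,0,1) + (u,r,s,0))" by auto
  show ?thesis unfolding e by (rule affine_deriv)
qed

lemma path_tau: "((\<lambda>x::real. (x*(1-y), r0 + x*y, s::real, \<phi>::real)) has_derivative (\<lambda>h. h *\<^sub>R (1-y,y,0,0))) F"
proof -
  have e: "(\<lambda>x::real. (x*(1-y), r0 + x*y, s, \<phi>)) = (\<lambda>x. x *\<^sub>R (1-y,y,0,0) + (0,r0,s,\<phi>))" by auto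
  show ?thesis unfolding e by (rule affine_deriv)
qed

lemma path_y: "((\<lambda>x::real. (\<tau>*(1-x), r0 + \<tau>*x, s::real, \<phi>::real)) has_derivative (\<lambda>h. h *\<^sub>R (-\<tau>,\<tau>,0,0))) F"
proof -
  have e: "(\<lambda>x::real. (\<tau>*(1-x), r0 + \<tau>*x, s, \<phi>)) = (\<lambda>x. x *\<^sub>R (-\<tau>,\<tau>,0,0) + (\<tau>,r0,s,\<phi>))"
    by (auto simp: algebra_simps)
  show ?thesis unfolding e by (rule affine_deriv)
qed

lemma Kmem: "z \<in> cbox (a,c) (b,d) \<longleftrightarrow> fst z \<in> {a..b::real} \<and> snd z \<in> {c..d::real}"
  by (cases z) (auto simp: cbox_interval)

locale energy =
  fixes r0 T :: real
    and R P Q :: "pt4 \<Rightarrow> real"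
    and R' P' Q' :: "pt4 \<Rightarrow> (pt4 \<Rightarrow>\<^sub>L real)"
  assumes r0_pos: "r0 > 0" and T_pos: "T > 0"
    and C1R: "C1_with (D_T r0 T) R R'"
    and C1P: "C1_with (D_T r0 T) P P'"
    and C1Q: "C1_with (D_T r0 T) Q Q'"
    and perR: "\<And>u r s \<phi>. (u, r, s, \<phi>) \<in> D_T r0 T \<Longrightarrow> R (u, r, s, \<phi> + 2 * pi) = R (u, r, s, \<phi>)"
    and perP: "\<And>u r s \<phi>. (u, r, s, \<phi>) \<in> D_T r0 T \<Longrightarrow> P (u, r, s, \<phi> + 2 * pi) = P (u, r, s, \<phi>)"
    and perQ: "\<And>u r s \<phi>. (u, r, s, \<phi>) \<in> D_T r0 T \<Longrightarrow> Q (u, r, s, \<phi> + 2 * pi) = Q (u, r, s, \<phi>)"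
    and eq1: "\<And>u r s \<phi>. (u, r, s, \<phi>) \<in> D_T r0 T \<Longrightarrow> \<bar>s\<bar> < 1 \<Longrightarrow>
      2 * d_u (R' (u, r, s, \<phi>)) =
        d_r (R' (u, r, s, \<phi>)) + sqrt (1 - s\<^sup>2) / r * d_s (P' (u, r, s, \<phi>))
        + 1 / (r * sqrt (1 - s\<^sup>2)) * d_phi (Q' (u, r, s, \<phi>))
        - s * P (u, r, s, \<phi>) / (r * sqrt (1 - s\<^sup>2))"
    and eq2: "\<And>u r s \<phi>. (u, r, s, \<phi>) \<in> D_T r0 T \<Longrightarrow> \<bar>s\<bar> < 1 \<Longrightarrow>
      d_r (P' (u, r, s, \<phi>)) = sqrt (1 - s\<^sup>2) / r * d_s (R' (u, r, s, \<phi>)) - P (u, r, s, \<phi>) / r"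
    and eq3: "\<And>u r s \<phi>. (u, r, s, \<phi>) \<in> D_T r0 T \<Longrightarrow> \<bar>s\<bar> < 1 \<Longrightarrow>
      d_r (Q' (u, r, s, \<phi>)) = 1 / (r * sqrt (1 - s\<^sup>2)) * d_phi (R' (u, r, s, \<phi>)) - Q (u, r, s, \<phi>) / r"
begin

lemma cR[continuous_intros]: "continuous_on S \<gamma> \<Longrightarrow> \<gamma> ` S \<subseteq> D_T r0 T \<Longrightarrow> continuous_on S (\<lambda>x. R (\<gamma> x))"
  by (rule continuous_on_compose2[OF C1_cont[OF C1R]])
lemma cP[continuous_intros]: "continuous_on S \<gamma> \<Longrightarrow> \<gamma> ` S \<subseteq> D_T r0 T \<Longrightarrow> continuous_on S (\<lambda>x. P (\<gamma> x))"
  by (rule continuous_on_compose2[OF C1_cont[OF C1P]])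
lemma cQ[continuous_intros]: "continuous_on S \<gamma> \<Longrightarrow> \<gamma> ` S \<subseteq> D_T r0 T \<Longrightarrow> continuous_on S (\<lambda>x. Q (\<gamma> x))"
  by (rule continuous_on_compose2[OF C1_cont[OF C1Q]])
lemma cR'[continuous_intros]: "continuous_on S \<gamma> \<Longrightarrow> \<gamma> ` S \<subseteq> D_T r0 T \<Longrightarrow> continuous_on S (\<lambda>x. blinfun_apply (R' (\<gamma> x)) v)"
  by (rule continuous_on_compose2[OF C1_cont'[OF C1R]])
lemma cP'[continuous_intros]: "continuous_on S \<gamma> \<Longrightarrow> \<gamma> ` S \<subseteq> D_T r0 T \<Longrightarrow> continuous_on S (\<lambda>x. blinfun_apply (P' (\<gamma> x)) v)"
  by (rule continuous_on_compose2[OF C1_cont'[OF C1P]])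
lemma cQ'[continuous_intros]: "continuous_on S \<gamma> \<Longrightarrow> \<gamma> ` S \<subseteq> D_T r0 T \<Longrightarrow> continuous_on S (\<lambda>x. blinfun_apply (Q' (\<gamma> x)) v)"
  by (rule continuous_on_compose2[OF C1_cont'[OF C1Q]])

lemma cd_uR[continuous_intros]: "continuous_on S \<gamma> \<Longrightarrow> \<gamma> ` S \<subseteq> D_T r0 T \<Longrightarrow> continuous_on S (\<lambda>x. d_u (R' (\<gamma> x)))"
  unfolding d_u_def by (rule cR')
lemma cd_rR[continuous_intros]: "continuous_on S \<gamma> \<Longrightarrow> \<gamma> ` S \<subseteq> D_T r0 T \<Longrightarrow> continuous_on S (\<lambda>x. d_r (R' (\<gamma> x)))"
  unfolding d_r_def by (rule cR')
lemma cd_sR[continuous_intros]: "continuous_on S \<gamma> \<Longrightarrow> \<gamma> ` S \<subseteq> D_T r0 T \<Longrightarrow> continuous_on S (\<lambda>x. d_s (R' (\<gamma> x)))"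
  unfolding d_s_def by (rule cR')
lemma cd_phiR[continuous_intros]: "continuous_on S \<gamma> \<Longrightarrow> \<gamma> ` S \<subseteq> D_T r0 T \<Longrightarrow> continuous_on S (\<lambda>x. d_phi (R' (\<gamma> x)))"
  unfolding d_phi_def by (rule cR')
lemma cd_uP[continuous_intros]: "continuous_on S \<gamma> \<Longrightarrow> \<gamma> ` S \<subseteq> D_T r0 T \<Longrightarrow> continuous_on S (\<lambda>x. d_u (P' (\<gamma> x)))"
  unfolding d_u_def by (rule cP')
lemma cd_rP[continuous_intros]: "continuous_on S \<gamma> \<Longrightarrow> \<gamma> ` S \<subseteq> D_T r0 T \<Longrightarrow> continuous_on S (\<lambda>x. d_r (P' (\<gamma> x)))"
  unfolding d_r_def by (rule cP')
lemma cd_sP[continuous_intros]: "continuous_on S \<gamma> \<Longrightarrow> \<gamma> ` S \<subseteq> D_T r0 T \<Longrightarrow> continuous_on S (\<lambda>x. d_s (P' (\<gamma> x)))"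
  unfolding d_s_def by (rule cP')
lemma cd_phiP[continuous_intros]: "continuous_on S \<gamma> \<Longrightarrow> \<gamma> ` S \<subseteq> D_T r0 T \<Longrightarrow> continuous_on S (\<lambda>x. d_phi (P' (\<gamma> x)))"
  unfolding d_phi_def by (rule cP')
lemma cd_uQ[continuous_intros]: "continuous_on S \<gamma> \<Longrightarrow> \<gamma> ` S \<subseteq> D_T r0 T \<Longrightarrow> continuous_on S (\<lambda>x. d_u (Q' (\<gamma> x)))"
  unfolding d_u_def by (rule cQ')
lemma cd_rQ[continuous_intros]: "continuous_on S \<gamma> \<Longrightarrow> \<gamma> ` S \<subseteq> D_T r0 T \<Longrightarrow> continuous_on S (\<lambda>x. d_r (Q' (\<gamma> x)))"
  unfolding d_r_def by (rule cQ')
lemma cd_sQ[continuous_intros]: "continuous_on S \<gamma> \<Longrightarrow> \<gamma> ` S \<subseteq> D_T r0 T \<Longrightarrow> continuous_on S (\<lambda>x. d_s (Q' (\<gamma> x)))"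
  unfolding d_s_def by (rule cQ')
lemma cd_phiQ[continuous_intros]: "continuous_on S \<gamma> \<Longrightarrow> \<gamma> ` S \<subseteq> D_T r0 T \<Longrightarrow> continuous_on S (\<lambda>x. d_phi (Q' (\<gamma> x)))"
  unfolding d_phi_def by (rule cQ')

definition "Lf q = 2 * R q * d_u (R' q) + P q * d_r (P' q) + Q q * d_r (Q' q) - R q * d_r (R' q)"

lemma key:
  assumes u: "0 \<le> u" and r: "r0 \<le> r" and ur: "u + r \<le> T + r0"
  shows "integral (cbox (-1,0) (1,2*pi)) (\<lambda>t. Lf (u, r, fst t, snd t)) \<le> 0"
proof -
  have rpos: "r > 0" using r r0_pos by linarith
  have qD: "\<And>s \<phi>. -1 \<le> s \<Longrightarrow> s \<le> 1 \<Longrightarrow> (u,r,s,\<phi>) \<in> D_T r0 T" using u r ur by (simp add: inD)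
  define w where "w s = sqrt (1 - s\<^sup>2)" for s :: real
  define Mf where "Mf s \<phi> = Lf (u,r,s,\<phi>) + ((P (u,r,s,\<phi>))\<^sup>2 + (Q (u,r,s,\<phi>))\<^sup>2) / r" for s \<phi>
  define J where "J s = integral (cbox 0 (2*pi)) (\<lambda>\<phi>. R (u,r,s,\<phi>) * P (u,r,s,\<phi>))" for s
  define J' where "J' s = integral (cbox 0 (2*pi)) (\<lambda>\<phi>. d_s (R' (u,r,s,\<phi>)) * P (u,r,s,\<phi>) + d_s (P' (u,r,s,\<phi>)) * R (u,r,s,\<phi>))" for s
  define m where "m s = integral (cbox 0 (2*pi)) (Mf s)" for s
  define H where "H s = w s * J s / r" for s
  have dJ: "(J has_real_derivative J' s) (at s within {-1..1})" if s: "s \<in> {-1..1}" for s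
    unfolding J_def J'_def
  proof (rule leibniz_rule_field_derivative)
    fix x t assume x: "x \<in> {-1..1::real}" and t: "t \<in> cbox 0 (2*pi::real)"
    have xD: "\<And>x'. x' \<in> {-1..1} \<Longrightarrow> (u,r,x',t) \<in> D_T r0 T" using qD by auto
    show "((\<lambda>x. R (u,r,x,t) * P (u,r,x,t)) has_real_derivative
        d_s (R' (u,r,x,t)) * P (u,r,x,t) + d_s (P' (u,r,x,t)) * R (u,r,x,t)) (at x within {-1..1})"
      unfolding d_s_def
      by (rule DERIV_mult[OF C1_path[OF C1R xD path_s x] C1_path[OF C1P xD path_s x]])
  next
    fix x :: real assume x: "x \<in> {-1..1}"
    show "(\<lambda>\<phi>. R (u,r,x,\<phi>) * P (u,r,x,\<phi>)) integrable_on cbox 0 (2*pi)"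
      using x by (intro integrable_continuous continuous_intros) (auto simp: qD)
  next
    show "continuous_on ({-1..1} \<times> cbox 0 (2*pi)) (\<lambda>(x, t). d_s (R' (u,r,x,t)) * P (u,r,x,t) + d_s (P' (u,r,x,t)) * R (u,r,x,t))"
      unfolding d_s_def split_beta
      by (intro continuous_intros) (auto simp: qD)
  qed (use s in auto)
  have contJ: "continuous_on {-1..1} J"
    using dJ by (meson DERIV_continuous continuous_on_eq_continuous_within)
  have contH: "continuous_on {-1..1} H"
    unfolding H_def w_def by (intro continuous_intros contJ) (use rpos in auto)
  have mval: "m s = (- s / w s * J s + J' s * w s) / r" if s: "s \<in> {-1<..<1}" for s
  proof -
    have s1: "\<bar>s\<bar> < 1" using s by auto
    have "s\<^sup>2 < 1" using s1 by (simp add: abs_square_less_1)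
    then have wpos: "w s > 0" unfolding w_def by simp
    have sD: "\<And>\<phi>. (u,r,s,\<phi>) \<in> D_T r0 T" using s qD by auto
    have Mf_eq: "Mf s \<phi> = (w s / r) * (d_s (R' (u,r,s,\<phi>)) * P (u,r,s,\<phi>) + d_s (P' (u,r,s,\<phi>)) * R (u,r,s,\<phi>))
        - (s / (r * w s)) * (R (u,r,s,\<phi>) * P (u,r,s,\<phi>))
        + (1 / (r * w s)) * (d_phi (R' (u,r,s,\<phi>)) * Q (u,r,s,\<phi>) + d_phi (Q' (u,r,s,\<phi>)) * R (u,r,s,\<phi>))" for \<phi>
    proof -
      have e1: "2 * d_u (R' (u,r,s,\<phi>)) = d_r (R' (u,r,s,\<phi>)) + (w s / r) * d_s (P' (u,r,s,\<phi>))
          + (1 / (r * w s)) * d_phi (Q' (u,r,s,\<phi>)) - s * P (u,r,s,\<phi>) * (1 / (r * w s))"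
        using eq1[OF sD s1] unfolding w_def by simp
      have e2: "d_r (P' (u,r,s,\<phi>)) = (w s / r) * d_s (R' (u,r,s,\<phi>)) - P (u,r,s,\<phi>) * (1 / r)"
        using eq2[OF sD s1] unfolding w_def by simp
      have e3: "d_r (Q' (u,r,s,\<phi>)) = (1 / (r * w s)) * d_phi (R' (u,r,s,\<phi>)) - Q (u,r,s,\<phi>) * (1 / r)"
        using eq3[OF sD s1] unfolding w_def by simp
      show ?thesis
        using alg[OF e1 e2 e3, of "R (u,r,s,\<phi>)"] unfolding Mf_def Lf_def by simp
    qed
    have I1: "((\<lambda>\<phi>. d_s (R' (u,r,s,\<phi>)) * P (u,r,s,\<phi>) + d_s (P' (u,r,s,\<phi>)) * R (u,r,s,\<phi>)) has_integral J' s) (cbox 0 (2*pi))"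
      unfolding J'_def d_s_def
      by (intro integrable_integral integrable_continuous continuous_intros) (auto simp: sD)
    have I2: "((\<lambda>\<phi>. R (u,r,s,\<phi>) * P (u,r,s,\<phi>)) has_integral J s) (cbox 0 (2*pi))"
      unfolding J_def
      by (intro integrable_integral integrable_continuous continuous_intros) (auto simp: sD)
    have I3: "((\<lambda>\<phi>. d_phi (R' (u,r,s,\<phi>)) * Q (u,r,s,\<phi>) + d_phi (Q' (u,r,s,\<phi>)) * R (u,r,s,\<phi>)) has_integral 0) (cbox 0 (2*pi))"
    proof -
      have xD: "\<And>x'. x' \<in> {0..2*pi} \<Longrightarrow> (u,r,s,x') \<in> D_T r0 T" using sD by auto
      have "((\<lambda>\<phi>. d_phi (R' (u,r,s,\<phi>)) * Q (u,r,s,\<phi>) + d_phi (Q' (u,r,s,\<phi>)) * R (u,r,s,\<phi>)) has_integral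
          (R (u,r,s,2*pi) * Q (u,r,s,2*pi) - R (u,r,s,0) * Q (u,r,s,0))) {0..2*pi}"
      proof (rule fundamental_theorem_of_calculus)
        fix x assume x: "x \<in> {0..2*pi}"
        show "((\<lambda>\<phi>. R (u,r,s,\<phi>) * Q (u,r,s,\<phi>)) has_vector_derivative
            d_phi (R' (u,r,s,x)) * Q (u,r,s,x) + d_phi (Q' (u,r,s,x)) * R (u,r,s,x)) (at x within {0..2*pi})"
          unfolding has_real_derivative_iff_has_vector_derivative[symmetric] d_phi_def
          by (rule DERIV_mult[OF C1_path[OF C1R xD path_phi x] C1_path[OF C1Q xD path_phi x]])
      qed simp
      moreover have "R (u,r,s,2*pi) = R (u,r,s,0)" using perR[OF sD, of 0] by simp
      moreover have "Q (u,r,s,2*pi) = Q (u,r,s,0)" using perQ[OF sD, of 0] by simp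
      ultimately show ?thesis by (simp add: cbox_interval)
    qed
    have "((\<lambda>\<phi>. (w s / r) * (d_s (R' (u,r,s,\<phi>)) * P (u,r,s,\<phi>) + d_s (P' (u,r,s,\<phi>)) * R (u,r,s,\<phi>))
        - (s / (r * w s)) * (R (u,r,s,\<phi>) * P (u,r,s,\<phi>))
        + (1 / (r * w s)) * (d_phi (R' (u,r,s,\<phi>)) * Q (u,r,s,\<phi>) + d_phi (Q' (u,r,s,\<phi>)) * R (u,r,s,\<phi>)))
        has_integral ((w s / r) * J' s - (s / (r * w s)) * J s + (1 / (r * w s)) * 0)) (cbox 0 (2*pi))"
      by (intro has_integral_add has_integral_diff has_integral_mult_right I1 I2 I3)
    then have "(Mf s has_integral ((w s / r) * J' s - (s / (r * w s)) * J s)) (cbox 0 (2*pi))"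
      by (simp add: Mf_eq[abs_def])
    then have "m s = (w s / r) * J' s - (s / (r * w s)) * J s"
      unfolding m_def by (rule integral_unique)
    then show ?thesis using wpos rpos by (simp add: field_simps)
  qed
  have dH: "(H has_vector_derivative m s) (at s)" if s: "s \<in> {-1<..<1}" for s
  proof -
    have "\<bar>s\<bar> < 1" using s by auto
    then have "s\<^sup>2 < 1" by (simp add: abs_square_less_1)
    then have pos: "1 - s\<^sup>2 > 0" by simp
    have J: "(J has_real_derivative J' s) (at s)"
      using dJ[of s] s by (simp add: at_within_Icc_at)
    have "DERIV (\<lambda>x. 1 - x\<^sup>2) s :> - 2 * s"
      by (auto intro!: derivative_eq_intros)
    from DERIV_chain2[OF DERIV_real_sqrt[OF pos] this]
    have "(w has_real_derivative (inverse (sqrt (1 - s\<^sup>2)) / 2 * (- 2 * s))) (at s)"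
      unfolding w_def .
    then have W: "(w has_real_derivative (- s / w s)) (at s)"
      by (rule DERIV_cong) (simp add: w_def divide_simps)
    have "(H has_real_derivative (- s / w s * J s + J' s * w s) / r) (at s)"
      unfolding H_def[abs_def] by (intro DERIV_cdivide DERIV_mult W J)
    then show ?thesis using mval[OF s]
      by (simp add: has_real_derivative_iff_has_vector_derivative)
  qed
  have "(m has_integral (H 1 - H (-1))) {-1..1}"
    by (rule fundamental_theorem_of_calculus_interior) (auto simp: contH dH)
  moreover have "H 1 = 0" "H (-1) = 0" by (simp_all add: H_def w_def)
  ultimately have m0: "integral {-1..1} m = 0" by (simp add: integral_unique)
  have KD: "(u,r,fst t,snd t) \<in> D_T r0 T" if "t \<in> cbox (-1,0) (1,2*pi)" for t
  proof -
    from that have "fst t \<in> {-1..1}" by (simp add: Kmem)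
    then show ?thesis by (intro qD) auto
  qed
  have KDi: "(\<lambda>t. (u,r,fst t,snd t)) ` cbox (-1,0) (1,2*pi) \<subseteq> D_T r0 T" by (rule image_subsetI) (rule KD)
  have contM: "continuous_on (cbox (-1,0) (1,2*pi)) (\<lambda>t. Mf (fst t) (snd t))"
    unfolding Mf_def Lf_def
    by (intro continuous_intros KDi; use rpos in auto)
  have "integral (cbox (-1,0) (1,2*pi)) (\<lambda>t. Mf (fst t) (snd t)) = integral (cbox (-1) 1) m"
    using integral_prod_continuous[OF contM] by (simp add: m_def[abs_def])
  then have M0: "integral (cbox (-1,0) (1,2*pi)) (\<lambda>t. Mf (fst t) (snd t)) = 0"
    using m0 by (simp add: cbox_interval)
  have contPQ: "continuous_on (cbox (-1,0) (1,2*pi)) (\<lambda>t. ((P (u,r,fst t,snd t))\<^sup>2 + (Q (u,r,fst t,snd t))\<^sup>2) / r)"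
    by (intro continuous_intros KDi; use rpos in auto)
  have "integral (cbox (-1,0) (1,2*pi)) (\<lambda>t. Lf (u, r, fst t, snd t))
      = integral (cbox (-1,0) (1,2*pi)) (\<lambda>t. Mf (fst t) (snd t) - ((P (u,r,fst t,snd t))\<^sup>2 + (Q (u,r,fst t,snd t))\<^sup>2) / r)"
    by (simp add: Mf_def)
  also have "\<dots> = integral (cbox (-1,0) (1,2*pi)) (\<lambda>t. Mf (fst t) (snd t))
      - integral (cbox (-1,0) (1,2*pi)) (\<lambda>t. ((P (u,r,fst t,snd t))\<^sup>2 + (Q (u,r,fst t,snd t))\<^sup>2) / r)"
    by (intro integral_diff integrable_continuous contM contPQ)
  also have "\<dots> \<le> 0"
    using M0 integral_nonneg[OF integrable_continuous[OF contPQ]] rpos by simp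
  finally show ?thesis .
qed

end


lemma Ymem: "z \<in> cbox (a,c,e) (b,d,f) \<longleftrightarrow> fst z \<in> {a..b::real} \<and> snd z \<in> cbox (c,e) (d,f::real)"
  by (cases z) (auto simp: cbox_interval)

lemma sqd:
  assumes "C1_with D F F'" "\<And>x. x \<in> S \<Longrightarrow> \<gamma> x \<in> D"
    "(\<gamma> has_derivative (\<lambda>h. h *\<^sub>R v)) (at x within S)" "x \<in> S"
  shows "((\<lambda>x. (F (\<gamma> x))\<^sup>2) has_real_derivative 2 * (F (\<gamma> x) * blinfun_apply (F' (\<gamma> x)) v)) (at x within S)"
proof -
  have d: "((\<lambda>x. F (\<gamma> x)) has_real_derivative blinfun_apply (F' (\<gamma> x)) v) (at x within S)"
    by (rule C1_path[OF assms])
  have "((\<lambda>x. F (\<gamma> x) * F (\<gamma> x)) has_real_derivative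
      blinfun_apply (F' (\<gamma> x)) v * F (\<gamma> x) + blinfun_apply (F' (\<gamma> x)) v * F (\<gamma> x)) (at x within S)"
    by (rule DERIV_mult[OF d d])
  then show ?thesis unfolding power2_eq_square
    by (rule DERIV_cong) (simp add: algebra_simps)
qed

context energy begin

abbreviation "KK \<equiv> cbox (-1,0) (1,2*pi) :: (real \<times> real) set"
abbreviation "YY \<equiv> cbox (0,-1,0) (1,1,2*pi) :: (real \<times> real \<times> real) set"

definition "pp \<tau> y t = (\<tau>*(1-y), r0 + \<tau>*y, fst t, (snd t::real))"
definition "e2 q = (R q)\<^sup>2 + (P q)\<^sup>2 + (Q q)\<^sup>2"
definition "b2 q = (P q)\<^sup>2 + (Q q)\<^sup>2 - (R q)\<^sup>2"
definition "eu q = R q * d_u (R' q) + P q * d_u (P' q) + Q q * d_u (Q' q)"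
definition "er q = R q * d_r (R' q) + P q * d_r (P' q) + Q q * d_r (Q' q)"
definition "bu q = P q * d_u (P' q) + Q q * d_u (Q' q) - R q * d_u (R' q)"
definition "br q = P q * d_r (P' q) + Q q * d_r (Q' q) - R q * d_r (R' q)"

lemma ppD:
  assumes "\<tau> \<in> {0..T}" "y \<in> {0..1}" "t \<in> KK"
  shows "pp \<tau> y t \<in> D_T r0 T"
proof -
  have a: "0 \<le> \<tau>*(1-y)" using assms by auto
  have b: "0 \<le> \<tau>*y" using assms by auto
  have c: "\<tau>*(1-y) + (r0 + \<tau>*y) = \<tau> + r0" by (simp add: algebra_simps)
  have d: "fst t \<in> {-1..1}" using assms(3) by (simp add: Kmem)
  show ?thesis unfolding pp_def inD using a b c d assms(1) by auto
qed

lemma e2d: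
  assumes "\<And>x. x \<in> S \<Longrightarrow> \<gamma> x \<in> D_T r0 T" "(\<gamma> has_derivative (\<lambda>h. h *\<^sub>R v)) (at x within S)" "x \<in> S"
  shows "((\<lambda>x. e2 (\<gamma> x)) has_real_derivative
     2 * (R (\<gamma> x) * blinfun_apply (R' (\<gamma> x)) v + P (\<gamma> x) * blinfun_apply (P' (\<gamma> x)) v + Q (\<gamma> x) * blinfun_apply (Q' (\<gamma> x)) v)) (at x within S)"
  unfolding e2_def
  by (rule DERIV_cong[OF DERIV_add[OF DERIV_add[OF sqd[OF C1R assms] sqd[OF C1P assms]] sqd[OF C1Q assms]]])
     (simp_all add: algebra_simps)

lemma b2d:
  assumes "\<And>x. x \<in> S \<Longrightarrow> \<gamma> x \<in> D_T r0 T" "(\<gamma> has_derivative (\<lambda>h. h *\<^sub>R v)) (at x within S)" "x \<in> S"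
  shows "((\<lambda>x. b2 (\<gamma> x)) has_real_derivative
     2 * (P (\<gamma> x) * blinfun_apply (P' (\<gamma> x)) v + Q (\<gamma> x) * blinfun_apply (Q' (\<gamma> x)) v - R (\<gamma> x) * blinfun_apply (R' (\<gamma> x)) v)) (at x within S)"
  unfolding b2_def
  by (rule DERIV_cong[OF DERIV_diff[OF DERIV_add[OF sqd[OF C1P assms] sqd[OF C1Q assms]] sqd[OF C1R assms]]])
     (simp_all add: algebra_simps)

lemma ppY:
  assumes "x \<in> {0..T}" "z \<in> YY"
  shows "(x*(1-fst z), r0 + x*fst z, fst (snd z), snd (snd z)) \<in> D_T r0 T"
proof -
  have "fst z \<in> {0..1}" "snd z \<in> KK" using assms(2) by (simp_all add: Ymem)
  from ppD[OF assms(1) this] show ?thesis by (simp add: pp_def)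
qed

lemma ppYY:
  assumes "w \<in> {0..T} \<times> YY"
  shows "(fst w*(1-fst (snd w)), r0 + fst w*fst (snd w), fst (snd (snd w)), snd (snd (snd w))) \<in> D_T r0 T"
  using assms ppY[of "fst w" "snd w"] by (cases w) simp

lemma dG:
  assumes \<tau>: "\<tau> \<in> {0..T}"
  shows "((\<lambda>\<tau>. integral YY (\<lambda>z. \<tau> * e2 (pp \<tau> (fst z) (snd z)))) has_real_derivative
     integral YY (\<lambda>z. e2 (pp \<tau> (fst z) (snd z)) + \<tau> * (2 * ((1 - fst z) * eu (pp \<tau> (fst z) (snd z)) + fst z * er (pp \<tau> (fst z) (snd z))))))
     (at \<tau> within {0..T})"
proof (rule leibniz_rule_field_derivative)
  fix x z assume x: "x \<in> {0..T}" and z: "z \<in> YY"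
  have y: "fst z \<in> {0..1}" and t: "snd z \<in> KK" using z by (simp_all add: Ymem)
  have gD: "\<And>x'. x' \<in> {0..T} \<Longrightarrow> pp x' (fst z) (snd z) \<in> D_T r0 T" using ppD y t by blast
  have pd: "((\<lambda>x. pp x (fst z) (snd z)) has_derivative (\<lambda>h. h *\<^sub>R (1 - fst z, fst z, 0, 0))) (at x within {0..T})"
    unfolding pp_def by (rule path_tau)
  have d: "((\<lambda>x. e2 (pp x (fst z) (snd z))) has_real_derivative
      2 * ((1 - fst z) * eu (pp x (fst z) (snd z)) + fst z * er (pp x (fst z) (snd z)))) (at x within {0..T})"
    by (rule DERIV_cong[OF e2d[OF gD pd x]]) (simp_all add: blin4 eu_def er_def algebra_simps)
  show "((\<lambda>x. x * e2 (pp x (fst z) (snd z))) has_real_derivative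
      e2 (pp x (fst z) (snd z)) + x * (2 * ((1 - fst z) * eu (pp x (fst z) (snd z)) + fst z * er (pp x (fst z) (snd z)))))
      (at x within {0..T})"
    by (rule DERIV_cong[OF DERIV_mult[OF DERIV_ident d]]) (simp add: algebra_simps)
next
  fix x assume x: "x \<in> {0..T}"
  show "(\<lambda>z. x * e2 (pp x (fst z) (snd z))) integrable_on YY"
    unfolding e2_def pp_def
    by (intro integrable_continuous continuous_intros image_subsetI ppY x)
next
  show "continuous_on ({0..T} \<times> YY) (\<lambda>(x, z). e2 (pp x (fst z) (snd z)) + x * (2 * ((1 - fst z) * eu (pp x (fst z) (snd z)) + fst z * er (pp x (fst z) (snd z)))))"
    unfolding e2_def eu_def er_def pp_def split_beta
    by (intro continuous_intros image_subsetI ppYY)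
qed (use \<tau> in auto)

definition "ha x = integral KK (\<lambda>t. (R (0, r0 + x, fst t, snd t))\<^sup>2)"
definition "hb x = integral KK (\<lambda>t. b2 (x, r0, fst t, snd t))"
definition "GG \<tau> = integral YY (\<lambda>z. \<tau> * e2 (pp \<tau> (fst z) (snd z)))"
definition "Gd \<tau> = integral YY (\<lambda>z. e2 (pp \<tau> (fst z) (snd z)) + \<tau> * (2 * ((1 - fst z) * eu (pp \<tau> (fst z) (snd z)) + fst z * er (pp \<tau> (fst z) (snd z)))))"
definition "FF \<tau> = GG \<tau> - 2 * integral {0..\<tau>} ha - integral {0..\<tau>} hb"

lemma haD: "w \<in> {0..T} \<times> KK \<Longrightarrow> (0, r0 + fst w, fst (snd w), snd (snd w)) \<in> D_T r0 T"
  by (cases w) (auto simp: inD Kmem)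
lemma hbD: "w \<in> {0..T} \<times> KK \<Longrightarrow> (fst w, r0, fst (snd w), snd (snd w)) \<in> D_T r0 T"
  by (cases w) (auto simp: inD Kmem)
lemma haD1: "\<tau> \<in> {0..T} \<Longrightarrow> t \<in> KK \<Longrightarrow> (0, r0 + \<tau>, fst t, snd t) \<in> D_T r0 T"
  using haD[of "(\<tau>,t)"] by simp
lemma hbD1: "\<tau> \<in> {0..T} \<Longrightarrow> t \<in> KK \<Longrightarrow> (\<tau>, r0, fst t, snd t) \<in> D_T r0 T"
  using hbD[of "(\<tau>,t)"] by simp

lemma cha: "continuous_on {0..T} ha"
proof -
  have "continuous_on {0..T} (\<lambda>x. integral KK (\<lambda>t. (R (0, r0 + x, fst t, snd t))\<^sup>2))"
    by (rule integral_continuous_on_param) (unfold split_beta, intro continuous_intros image_subsetI haD)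
  then show ?thesis unfolding ha_def[abs_def] .
qed

lemma chb: "continuous_on {0..T} hb"
proof -
  have "continuous_on {0..T} (\<lambda>x. integral KK (\<lambda>t. b2 (x, r0, fst t, snd t)))"
    by (rule integral_continuous_on_param) (unfold split_beta b2_def, intro continuous_intros image_subsetI hbD)
  then show ?thesis unfolding hb_def[abs_def] .
qed

lemma dF: "\<tau> \<in> {0..T} \<Longrightarrow> (FF has_real_derivative Gd \<tau> - 2 * ha \<tau> - hb \<tau>) (at \<tau> within {0..T})"
  unfolding FF_def[abs_def]
  by (intro DERIV_diff DERIV_cmult integral_has_real_derivative cha chb dG[unfolded GG_def[symmetric] Gd_def[symmetric]])

lemma Gd_eq:
  assumes \<tau>: "\<tau> \<in> {0..T}"
  shows "Gd \<tau> = 2 * ha \<tau> + hb \<tau> + 2 * \<tau> * integral YY (\<lambda>z. Lf (pp \<tau> (fst z) (snd z)))"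
proof -
  define \<phi>d where "\<phi>d z = e2 (pp \<tau> (fst z) (snd z)) + fst z * (\<tau> * (2 * (er (pp \<tau> (fst z) (snd z)) - eu (pp \<tau> (fst z) (snd z)))))" for z :: "real \<times> real \<times> real"
  define \<beta>d where "\<beta>d z = \<tau> * (2 * (br (pp \<tau> (fst z) (snd z)) - bu (pp \<tau> (fst z) (snd z))))" for z :: "real \<times> real \<times> real"
  have pw: "e2 (pp \<tau> (fst z) (snd z)) + \<tau> * (2 * ((1 - fst z) * eu (pp \<tau> (fst z) (snd z)) + fst z * er (pp \<tau> (fst z) (snd z))))
      = (\<phi>d z - \<beta>d z) + 2 * \<tau> * Lf (pp \<tau> (fst z) (snd z))" for z
    unfolding \<phi>d_def \<beta>d_def eu_def er_def bu_def br_def Lf_def by algebra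
  have c\<phi>\<beta>: "continuous_on YY (\<lambda>z. \<phi>d z - \<beta>d z)"
    unfolding \<phi>d_def \<beta>d_def e2_def eu_def er_def bu_def br_def pp_def
    by (intro continuous_intros image_subsetI ppY \<tau>)
  have cL: "continuous_on YY (\<lambda>z. Lf (pp \<tau> (fst z) (snd z)))"
    unfolding Lf_def pp_def by (intro continuous_intros image_subsetI ppY \<tau>)
  have "Gd \<tau> = integral YY (\<lambda>z. (\<phi>d z - \<beta>d z) + 2 * \<tau> * Lf (pp \<tau> (fst z) (snd z)))"
    unfolding Gd_def by (simp only: pw)
  also have "\<dots> = integral YY (\<lambda>z. \<phi>d z - \<beta>d z) + integral YY (\<lambda>z. 2 * \<tau> * Lf (pp \<tau> (fst z) (snd z)))"
    by (intro integral_add integrable_continuous c\<phi>\<beta> continuous_on_mult_left cL)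
  also have "integral YY (\<lambda>z. 2 * \<tau> * Lf (pp \<tau> (fst z) (snd z))) = 2 * \<tau> * integral YY (\<lambda>z. Lf (pp \<tau> (fst z) (snd z)))"
    by simp
  also have "integral YY (\<lambda>z. \<phi>d z - \<beta>d z) = integral (cbox 0 1) (\<lambda>y. integral KK (\<lambda>t. \<phi>d (y,t) - \<beta>d (y,t)))"
    using integral_prod_continuous[OF c\<phi>\<beta>] by simp
  also have "\<dots> = integral KK (\<lambda>t. integral (cbox 0 1) (\<lambda>y. \<phi>d (y,t) - \<beta>d (y,t)))"
  proof (rule integral_swap_continuous)
    have "(\<lambda>(x, y). \<phi>d (x, y) - \<beta>d (x, y)) = (\<lambda>z. \<phi>d z - \<beta>d z)" by auto
    then show "continuous_on (cbox (0, -1, 0) (1, 1, 2 * pi)) (\<lambda>(x, y). \<phi>d (x, y) - \<beta>d (x, y))"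
      using c\<phi>\<beta> by simp
  qed
  also have "\<dots> = integral KK (\<lambda>t. 2 * (R (0, r0 + \<tau>, fst t, snd t))\<^sup>2 + b2 (\<tau>, r0, fst t, snd t))"
  proof (rule integral_cong)
    fix t assume t: "t \<in> KK"
    have yD: "\<And>y. y \<in> {0..1} \<Longrightarrow> pp \<tau> y t \<in> D_T r0 T" using ppD \<tau> t by blast
    have "((\<lambda>y. \<phi>d (y,t) - \<beta>d (y,t)) has_integral
        ((1 * e2 (pp \<tau> 1 t) - b2 (pp \<tau> 1 t)) - (0 * e2 (pp \<tau> 0 t) - b2 (pp \<tau> 0 t)))) {0..1}"
    proof (rule fundamental_theorem_of_calculus)
      fix y :: real assume y: "y \<in> {0..1}"
      have pd: "((\<lambda>y. pp \<tau> y t) has_derivative (\<lambda>h. h *\<^sub>R (-\<tau>, \<tau>, 0, 0))) (at y within {0..1})"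
        unfolding pp_def by (rule path_y)
      have d1: "((\<lambda>y. e2 (pp \<tau> y t)) has_real_derivative 2 * (\<tau> * (er (pp \<tau> y t) - eu (pp \<tau> y t)))) (at y within {0..1})"
        by (rule DERIV_cong[OF e2d[OF yD pd y]]) (simp_all add: blin4 eu_def er_def algebra_simps)
      have d2: "((\<lambda>y. b2 (pp \<tau> y t)) has_real_derivative 2 * (\<tau> * (br (pp \<tau> y t) - bu (pp \<tau> y t)))) (at y within {0..1})"
        by (rule DERIV_cong[OF b2d[OF yD pd y]]) (simp_all add: blin4 bu_def br_def algebra_simps)
      have "((\<lambda>y. y * e2 (pp \<tau> y t) - b2 (pp \<tau> y t)) has_real_derivative \<phi>d (y,t) - \<beta>d (y,t)) (at y within {0..1})"
        by (rule DERIV_cong[OF DERIV_diff[OF DERIV_mult[OF DERIV_ident d1] d2]]) (simp add: \<phi>d_def \<beta>d_def algebra_simps)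
      then show "((\<lambda>y. y * e2 (pp \<tau> y t) - b2 (pp \<tau> y t)) has_vector_derivative \<phi>d (y,t) - \<beta>d (y,t)) (at y within {0..1})"
        by (simp add: has_real_derivative_iff_has_vector_derivative)
    qed simp
    moreover have "(1 * e2 (pp \<tau> 1 t) - b2 (pp \<tau> 1 t)) - (0 * e2 (pp \<tau> 0 t) - b2 (pp \<tau> 0 t))
        = 2 * (R (0, r0 + \<tau>, fst t, snd t))\<^sup>2 + b2 (\<tau>, r0, fst t, snd t)"
      by (simp add: pp_def e2_def b2_def)
    ultimately have "((\<lambda>y. \<phi>d (y,t) - \<beta>d (y,t)) has_integral
        (2 * (R (0, r0 + \<tau>, fst t, snd t))\<^sup>2 + b2 (\<tau>, r0, fst t, snd t))) {0..1}"
      by simp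
    then show "integral (cbox 0 1) (\<lambda>y. \<phi>d (y,t) - \<beta>d (y,t)) = 2 * (R (0, r0 + \<tau>, fst t, snd t))\<^sup>2 + b2 (\<tau>, r0, fst t, snd t)"
      by (simp add: integral_unique)
  qed
  also have "\<dots> = 2 * ha \<tau> + hb \<tau>"
  proof -
    have c1: "continuous_on KK (\<lambda>t. (R (0, r0 + \<tau>, fst t, snd t))\<^sup>2)"
      by (intro continuous_intros image_subsetI haD1 \<tau>)
    have c2: "continuous_on KK (\<lambda>t. b2 (\<tau>, r0, fst t, snd t))"
      unfolding b2_def by (intro continuous_intros image_subsetI hbD1 \<tau>)
    have i1: "(\<lambda>t. 2 * (R (0, r0 + \<tau>, fst t, snd t))\<^sup>2) integrable_on KK"
      by (intro integrable_continuous continuous_on_mult_left c1)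
    have i2: "(\<lambda>t. b2 (\<tau>, r0, fst t, snd t)) integrable_on KK"
      by (intro integrable_continuous c2)
    show ?thesis unfolding ha_def hb_def integral_add[OF i1 i2] by simp
  qed
  finally show ?thesis by simp
qed

lemma Lneg:
  assumes \<tau>: "\<tau> \<in> {0..T}"
  shows "integral YY (\<lambda>z. Lf (pp \<tau> (fst z) (snd z))) \<le> 0"
proof -
  have cL: "continuous_on YY (\<lambda>z. Lf (pp \<tau> (fst z) (snd z)))"
    unfolding Lf_def pp_def by (intro continuous_intros image_subsetI ppY \<tau>)
  have YYeq: "YY = cbox 0 1 \<times> KK" by (simp add: cbox_Pair_eq)
  have feq: "(\<lambda>(y, t). Lf (pp \<tau> y t)) = (\<lambda>z. Lf (pp \<tau> (fst z) (snd z)))" by auto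
  have "integral YY (\<lambda>z. Lf (pp \<tau> (fst z) (snd z))) = integral (cbox 0 1) (\<lambda>y. integral KK (\<lambda>t. Lf (pp \<tau> y t)))"
    using integral_prod_continuous[OF cL] by simp
  also have "\<dots> \<le> integral (cbox 0 1) (\<lambda>y::real. 0::real)"
  proof (rule Henstock_Kurzweil_Integration.integral_le)
    have "continuous_on (cbox 0 1 \<times> KK) (\<lambda>(y, t). Lf (pp \<tau> y t))"
      using cL unfolding feq YYeq .
    then show "(\<lambda>y. integral KK (\<lambda>t. Lf (pp \<tau> y t))) integrable_on cbox 0 1"
      by (intro integrable_continuous integral_continuous_on_param)
    show "(\<lambda>y::real. 0::real) integrable_on cbox 0 1" by (rule integrable_0)
  next
    fix y :: real assume y: "y \<in> cbox 0 1"
    have a: "0 \<le> \<tau>*(1-y)" using \<tau> y by auto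
    have b: "r0 \<le> r0 + \<tau>*y" using \<tau> y by auto
    have c: "\<tau>*(1-y) + (r0 + \<tau>*y) \<le> T + r0" using \<tau> by (simp add: algebra_simps)
    show "integral KK (\<lambda>t. Lf (pp \<tau> y t)) \<le> 0"
      unfolding pp_def by (rule key[OF a b c])
  qed
  also have "\<dots> = 0" by simp
  finally show ?thesis .
qed

lemma FF_T: "FF T \<le> 0"
proof -
  have "\<exists>x\<in>{0<..<T}. FF T - FF 0 = (*) (Gd x - 2 * ha x - hb x) (T - 0)"
    by (rule mvt_simple[OF T_pos]) (use dF in \<open>auto simp: has_field_derivative_def\<close>)
  then obtain x where x: "x \<in> {0<..<T}" and eq: "FF T - FF 0 = (Gd x - 2 * ha x - hb x) * T"
    by auto
  have x': "x \<in> {0..T}" using x by auto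
  have "Gd x - 2 * ha x - hb x = 2 * x * integral YY (\<lambda>z. Lf (pp x (fst z) (snd z)))"
    using Gd_eq[OF x'] by simp
  also have "\<dots> \<le> 0" using Lneg[OF x'] x by (simp add: mult_nonneg_nonpos)
  finally have "Gd x - 2 * ha x - hb x \<le> 0" .
  then have "FF T - FF 0 \<le> 0" unfolding eq using T_pos by (simp add: mult_nonpos_nonneg)
  moreover have "FF 0 = 0" by (simp add: FF_def GG_def)
  ultimately show ?thesis by simp
qed

lemma main:
  shows "integral (cbox (r0, -1, 0) (T + r0, 1, 2 * pi))
           (\<lambda>(r, s, \<phi>). (R (T + r0 - r, r, s, \<phi>))\<^sup>2 + (P (T + r0 - r, r, s, \<phi>))\<^sup>2
                          + (Q (T + r0 - r, r, s, \<phi>))\<^sup>2)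
         \<le> 2 * (integral (cbox (r0, -1, 0) (T + r0, 1, 2 * pi))
                    (\<lambda>(r, s, \<phi>). (R (0, r, s, \<phi>))\<^sup>2)
                + integral (cbox (0, -1, 0) (T, 1, 2 * pi))
                    (\<lambda>(u, s, \<phi>). (P (u, r0, s, \<phi>))\<^sup>2 + (Q (u, r0, s, \<phi>))\<^sup>2))"
proof -
  define gh where "gh r = integral KK (\<lambda>t. e2 (T + r0 - r, r, fst t, snd t))" for r
  define hr where "hr r = integral KK (\<lambda>t. (R (0, r, fst t, snd t))\<^sup>2)" for r
  define hpq where "hpq u = integral KK (\<lambda>t. (P (u, r0, fst t, snd t))\<^sup>2 + (Q (u, r0, fst t, snd t))\<^sup>2)" for u
  have D1: "(T + r0 - fst w, fst w, fst (snd w), snd (snd w)) \<in> D_T r0 T" if "w \<in> {r0..T+r0} \<times> KK" for w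
    using that by (cases w) (auto simp: inD Kmem)
  have D2: "(0, fst w, fst (snd w), snd (snd w)) \<in> D_T r0 T" if "w \<in> {r0..T+r0} \<times> KK" for w
    using that by (cases w) (auto simp: inD Kmem)
  have B1: "cbox (r0,-1,0) (T+r0,1,2*pi) = {r0..T+r0} \<times> KK"
    unfolding cbox_Pair_eq[of r0 "(-1,0)" "T+r0" "(1,2*pi)"] cbox_interval[of r0 "T+r0"] ..
  have B2: "cbox (0,-1,0) (T,1,2*pi) = {0..T} \<times> KK"
    unfolding cbox_Pair_eq[of 0 "(-1,0)" T "(1,2*pi)"] cbox_interval[of 0 T] ..
  have f1: "(\<lambda>(r, s, \<phi>). (R (T + r0 - r, r, s, \<phi>))\<^sup>2 + (P (T + r0 - r, r, s, \<phi>))\<^sup>2 + (Q (T + r0 - r, r, s, \<phi>))\<^sup>2)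
      = (\<lambda>z. e2 (T + r0 - fst z, fst z, fst (snd z), snd (snd z)))"
    by (simp add: e2_def case_prod_unfold)
  have cf1: "continuous_on (cbox (r0,-1,0) (T+r0,1,2*pi)) (\<lambda>z. e2 (T + r0 - fst z, fst z, fst (snd z), snd (snd z)))"
    unfolding B1 e2_def by (intro continuous_intros image_subsetI D1)
  have L1: "integral (cbox (r0, -1, 0) (T + r0, 1, 2 * pi))
           (\<lambda>(r, s, \<phi>). (R (T + r0 - r, r, s, \<phi>))\<^sup>2 + (P (T + r0 - r, r, s, \<phi>))\<^sup>2 + (Q (T + r0 - r, r, s, \<phi>))\<^sup>2)
      = integral {r0..T+r0} gh"
    unfolding f1 integral_prod_continuous[OF cf1] by (simp add: gh_def[abs_def] cbox_interval)
  have cgh: "continuous_on {r0..T+r0} gh"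
  proof -
    have "continuous_on {r0..T+r0} (\<lambda>r. integral KK (\<lambda>t. e2 (T + r0 - r, r, fst t, snd t)))"
      by (rule integral_continuous_on_param) (unfold split_beta e2_def, intro continuous_intros image_subsetI D1)
    then show ?thesis unfolding gh_def[abs_def] .
  qed
  have T0: "T \<in> {0..T}" using T_pos by simp
  have cG: "continuous_on YY (\<lambda>z. T * e2 (pp T (fst z) (snd z)))"
    unfolding e2_def pp_def by (intro continuous_intros image_subsetI ppY T0)
  have ppT: "pp T y t = (T + r0 - (r0 + T*y), r0 + T*y, fst t, snd t)" for y t
    by (simp add: pp_def algebra_simps)
  have "GG T = integral (cbox 0 1) (\<lambda>y. integral KK (\<lambda>t. T * e2 (pp T y t)))"
    unfolding GG_def using integral_prod_continuous[OF cG] by simp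
  also have "\<dots> = integral {0..1} (\<lambda>y. T *\<^sub>R gh (r0 + T*y))"
    by (simp add: gh_def ppT cbox_interval)
  also have "\<dots> = integral {r0 + T*0 .. r0 + T*1} gh"
  proof (rule integral_unique, rule has_integral_substitution[where c=r0 and d="T+r0"])
    show "(\<lambda>y. r0 + T * y) ` {0..1} \<subseteq> {r0..T + r0}"
    proof (rule image_subsetI)
      fix y :: real assume y: "y \<in> {0..1}"
      have "T * y \<le> T * 1" using y T_pos by (intro mult_left_mono) auto
      moreover have "0 \<le> T * y" using y T_pos by auto
      ultimately show "r0 + T * y \<in> {r0..T + r0}" by auto
    qed
    show "\<And>x. x \<in> {0..1} \<Longrightarrow> ((\<lambda>y. r0 + T * y) has_real_derivative T) (at x within {0..1})"
      by (auto intro!: derivative_eq_intros)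
  qed (use T_pos cgh in auto)
  also have "\<dots> = integral {r0..T+r0} gh" by (simp add: add.commute)
  finally have L2: "GG T = integral {r0..T+r0} gh" .
  have f2: "(\<lambda>(r, s, \<phi>). (R (0, r, s, \<phi>))\<^sup>2) = (\<lambda>z. (R (0, fst z, fst (snd z), snd (snd z)))\<^sup>2)"
    by (simp add: case_prod_unfold)
  have cf2: "continuous_on (cbox (r0,-1,0) (T+r0,1,2*pi)) (\<lambda>z. (R (0, fst z, fst (snd z), snd (snd z)))\<^sup>2)"
    unfolding B1 by (intro continuous_intros image_subsetI D2)
  have R1: "integral (cbox (r0, -1, 0) (T + r0, 1, 2 * pi)) (\<lambda>(r, s, \<phi>). (R (0, r, s, \<phi>))\<^sup>2) = integral {r0..T+r0} hr"
    unfolding f2 integral_prod_continuous[OF cf2] by (simp add: hr_def[abs_def] cbox_interval)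
  have "integral {r0 - r0..T + r0 - r0} (\<lambda>x. hr (x + r0)) = integral {r0..T + r0} hr"
    by (rule integral_shift_real_ivl)
  moreover have "(\<lambda>x. hr (x + r0)) = ha" by (auto simp: hr_def ha_def add.commute)
  ultimately have R1': "integral {0..T} ha = integral {r0..T+r0} hr" by simp
  have f3: "(\<lambda>(u, s, \<phi>). (P (u, r0, s, \<phi>))\<^sup>2 + (Q (u, r0, s, \<phi>))\<^sup>2)
      = (\<lambda>z. (P (fst z, r0, fst (snd z), snd (snd z)))\<^sup>2 + (Q (fst z, r0, fst (snd z), snd (snd z)))\<^sup>2)"
    by (simp add: case_prod_unfold)
  have cf3: "continuous_on (cbox (0,-1,0) (T,1,2*pi)) (\<lambda>z. (P (fst z, r0, fst (snd z), snd (snd z)))\<^sup>2 + (Q (fst z, r0, fst (snd z), snd (snd z)))\<^sup>2)"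
    unfolding B2 by (intro continuous_intros image_subsetI hbD)
  have R2: "integral (cbox (0, -1, 0) (T, 1, 2 * pi)) (\<lambda>(u, s, \<phi>). (P (u, r0, s, \<phi>))\<^sup>2 + (Q (u, r0, s, \<phi>))\<^sup>2)
      = integral {0..T} hpq"
    unfolding f3 integral_prod_continuous[OF cf3] by (simp add: hpq_def[abs_def] cbox_interval)
  have chpq: "continuous_on {0..T} hpq"
  proof -
    have "continuous_on {0..T} (\<lambda>u. integral KK (\<lambda>t. (P (u, r0, fst t, snd t))\<^sup>2 + (Q (u, r0, fst t, snd t))\<^sup>2))"
      by (rule integral_continuous_on_param) (unfold split_beta, intro continuous_intros image_subsetI hbD)
    then show ?thesis unfolding hpq_def[abs_def] .
  qed
  have hb_le: "integral {0..T} hb \<le> integral {0..T} hpq"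
  proof (rule Henstock_Kurzweil_Integration.integral_le)
    show "hb integrable_on {0..T}" using chb by (rule integrable_continuous_real)
    show "hpq integrable_on {0..T}" using chpq by (rule integrable_continuous_real)
  next
    fix x assume x: "x \<in> {0..T}"
    have c1: "continuous_on KK (\<lambda>t. b2 (x, r0, fst t, snd t))"
      unfolding b2_def by (intro continuous_intros image_subsetI hbD1 x)
    have c2: "continuous_on KK (\<lambda>t. (P (x, r0, fst t, snd t))\<^sup>2 + (Q (x, r0, fst t, snd t))\<^sup>2)"
      by (intro continuous_intros image_subsetI hbD1 x)
    show "hb x \<le> hpq x" unfolding hb_def hpq_def
      by (rule Henstock_Kurzweil_Integration.integral_le[OF integrable_continuous[OF c1] integrable_continuous[OF c2]])
         (simp add: b2_def)
  qed
  have hpq_nn: "0 \<le> integral {0..T} hpq"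
  proof (rule integral_nonneg)
    show "hpq integrable_on {0..T}" using chpq by (rule integrable_continuous_real)
  next
    fix x assume x: "x \<in> {0..T}"
    have c2: "continuous_on KK (\<lambda>t. (P (x, r0, fst t, snd t))\<^sup>2 + (Q (x, r0, fst t, snd t))\<^sup>2)"
      by (intro continuous_intros image_subsetI hbD1 x)
    show "0 \<le> hpq x" unfolding hpq_def
      by (rule integral_nonneg[OF integrable_continuous[OF c2]]) simp
  qed
  have "GG T \<le> 2 * integral {0..T} ha + integral {0..T} hb"
    using FF_T unfolding FF_def by simp
  then show ?thesis
    unfolding L1 R1 R2 L2[symmetric] R1'[symmetric] using hb_le hpq_nn by simp
qed

end

theorem theorem2:
  fixes r0 T :: real
    and R P Q :: "pt4 \<Rightarrow> real"
    and R' P' Q' :: "pt4 \<Rightarrow> (pt4 \<Rightarrow>\<^sub>L real)"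
  assumes r0_pos: "r0 > 0" and T_pos: "T > 0"
    and C1R: "C1_with (D_T r0 T) R R'"
    and C1P: "C1_with (D_T r0 T) P P'"
    and C1Q: "C1_with (D_T r0 T) Q Q'"
    and perR: "\<And>u r s \<phi>. (u, r, s, \<phi>) \<in> D_T r0 T \<Longrightarrow> R (u, r, s, \<phi> + 2 * pi) = R (u, r, s, \<phi>)"
    and perP: "\<And>u r s \<phi>. (u, r, s, \<phi>) \<in> D_T r0 T \<Longrightarrow> P (u, r, s, \<phi> + 2 * pi) = P (u, r, s, \<phi>)"
    and perQ: "\<And>u r s \<phi>. (u, r, s, \<phi>) \<in> D_T r0 T \<Longrightarrow> Q (u, r, s, \<phi> + 2 * pi) = Q (u, r, s, \<phi>)"
    and eq1: "\<And>u r s \<phi>. (u, r, s, \<phi>) \<in> D_T r0 T \<Longrightarrow> \<bar>s\<bar> < 1 \<Longrightarrow>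
      2 * d_u (R' (u, r, s, \<phi>)) =
        d_r (R' (u, r, s, \<phi>)) + sqrt (1 - s\<^sup>2) / r * d_s (P' (u, r, s, \<phi>))
        + 1 / (r * sqrt (1 - s\<^sup>2)) * d_phi (Q' (u, r, s, \<phi>))
        - s * P (u, r, s, \<phi>) / (r * sqrt (1 - s\<^sup>2))"
    and eq2: "\<And>u r s \<phi>. (u, r, s, \<phi>) \<in> D_T r0 T \<Longrightarrow> \<bar>s\<bar> < 1 \<Longrightarrow>
      d_r (P' (u, r, s, \<phi>)) = sqrt (1 - s\<^sup>2) / r * d_s (R' (u, r, s, \<phi>)) - P (u, r, s, \<phi>) / r"
    and eq3: "\<And>u r s \<phi>. (u, r, s, \<phi>) \<in> D_T r0 T \<Longrightarrow> \<bar>s\<bar> < 1 \<Longrightarrow>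
      d_r (Q' (u, r, s, \<phi>)) = 1 / (r * sqrt (1 - s\<^sup>2)) * d_phi (R' (u, r, s, \<phi>)) - Q (u, r, s, \<phi>) / r"
  shows "integral (cbox (r0, -1, 0) (T + r0, 1, 2 * pi))
           (\<lambda>(r, s, \<phi>). (R (T + r0 - r, r, s, \<phi>))\<^sup>2 + (P (T + r0 - r, r, s, \<phi>))\<^sup>2
                          + (Q (T + r0 - r, r, s, \<phi>))\<^sup>2)
         \<le> 2 * (integral (cbox (r0, -1, 0) (T + r0, 1, 2 * pi))
                    (\<lambda>(r, s, \<phi>). (R (0, r, s, \<phi>))\<^sup>2)
                + integral (cbox (0, -1, 0) (T, 1, 2 * pi))
                    (\<lambda>(u, s, \<phi>). (P (u, r0, s, \<phi>))\<^sup>2 + (Q (u, r0, s, \<phi>))\<^sup>2))"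
proof -
  interpret energy r0 T R P Q R' P' Q'
    by unfold_locales (fact r0_pos T_pos C1R C1P C1Q perR perP perQ eq1 eq2 eq3)+
  show ?thesis by (rule main)
qed

end
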